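(* Let $\Delta$, $\Gamma$ be arbitrary contexts, both possibly containing locks, $A$ an arbitrary type, and $t$ a term of type $A$ of $\mathrm{IK}_C$ (or $\mathrm{IS4}_C$) in the concatenated context $\Delta, \Gamma$ that does not mention any variables from $\Delta$. Then there is a term $t'$ of type $A$ in context $\Gamma$ of $\mathrm{IK}_C$ (or $\mathrm{IS4}_C$, respectively).
   Context: Types $A::=\iota\mid A\to B\mid\Box A$; contexts $\Gamma::=\cdot\mid\Gamma,A\mid\Gamma,\mathsf{lock}$ ($\mathsf{lock}$ the context lock); $\Delta,\Gamma$ denotes context concatenation. Both calculi have STLC terms plus $\mathsf{box}\,t:\Box A$ in $\Gamma$ from $t:A$ in $\Gamma,\mathsf{lock}$, and $\mathsf{unbox}(t,e):A$ in $\Gamma$ from $t:\Box A$ in $\Delta$ and $e:\Delta\mathrel{R}\Gamma$, where in $\mathrm{IK}_C$, $\Delta\mathrel{R}\Gamma$ means $\Gamma=\Delta,\mathsf{lock},\Delta'$ with $\Delta'$ lock-free, and in $\mathrm{IS4}_C$ it means $\Gamma$ extends $\Delta$ by any types and locks. Both calculi have normalization functions (via NbE) into $\beta\eta$-normal forms, which do not introduce new free variables. *)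

theory Defs
  imports Main
begin

datatype ty = Iota | Fun ty ty | Box ty

text \<open>Context entries; a context is a list whose LAST element is the most recent
  entry, so context concatenation \<open>\<Delta>, \<Gamma>\<close> is \<open>\<Delta> @ \<Gamma>\<close>.\<close>
datatype entry = T ty | Lock

type_synonym ctx = "entry list"

definition lock_free :: "ctx \<Rightarrow> bool" where
  "lock_free G \<longleftrightarrow> Lock \<notin> set G"

definition ntys :: "ctx \<Rightarrow> nat" where
  "ntys G = length (filter (\<lambda>e. e \<noteq> Lock) G)"

datatype calculus = IK_C | IS4_C

text \<open>Raw terms with de Bruijn indices (counting variables, not locks, from the
  right end of the context).  \<open>Unbox t e\<close> carries the witness \<open>e\<close> of \<open>\<Delta> R \<Gamma>\<close>,
  represented as the extension \<open>e\<close> with \<open>\<Gamma> = \<Delta> @ e\<close>.\<close>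
datatype tm = Var nat | Lam tm | App tm tm | BoxI tm | Unbox tm ctx

fun ext_ok :: "calculus \<Rightarrow> ctx \<Rightarrow> bool" where
  "ext_ok IK_C e \<longleftrightarrow> (\<exists>e'. e = Lock # e' \<and> lock_free e')"
| "ext_ok IS4_C e \<longleftrightarrow> True"

inductive typed :: "calculus \<Rightarrow> ctx \<Rightarrow> tm \<Rightarrow> ty \<Rightarrow> bool" where
  var: "lock_free G2 \<Longrightarrow> typed c (G1 @ [T A] @ G2) (Var (length G2)) A"
| lam: "typed c (G @ [T A]) t B \<Longrightarrow> typed c G (Lam t) (Fun A B)"
| app: "typed c G t (Fun A B) \<Longrightarrow> typed c G u A \<Longrightarrow> typed c G (App t u) B"
| box: "typed c (G @ [Lock]) t A \<Longrightarrow> typed c G (BoxI t) (Box A)"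
| unbox: "typed c D t (Box A) \<Longrightarrow> ext_ok c e \<Longrightarrow> typed c (D @ e) (Unbox t e) A"

fun fv :: "tm \<Rightarrow> nat set" where
  "fv (Var n) = {n}"
| "fv (Lam t) = {n. Suc n \<in> fv t}"
| "fv (App t u) = fv t \<union> fv u"
| "fv (BoxI t) = fv t"
| "fv (Unbox t e) = (\<lambda>n. n + ntys e) ` fv t"

end

theory Submission
  imports Defs
begin

lemma typed_prefix: "typed c G t A \<Longrightarrow> typed c (W @ G) t A"
proof (induction rule: typed.induct)
  case (var G2 c G1 A)
  then show ?case using typed.var[of G2 c "W @ G1" A] by simp
next
  case (lam c G A t B)
  then show ?case using typed.lam[of c "W @ G" A t B] by simp
next
  case (app c G t A B u)
  then show ?case by (simp add: typed.app)
next
  case (box c G t A)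
  then show ?case using typed.box[of c "W @ G" t A] by simp
next
  case (unbox c D t A e)
  then show ?case using typed.unbox[of c "W @ D" t A e] by simp
qed

lemma typed_weak_gen:
  "typed c G t A \<Longrightarrow> \<forall>G1 G2. G = G1 @ G2 \<longrightarrow> lock_free W \<longrightarrow> (\<exists>t'. typed c (G1 @ W @ G2) t' A)"
proof (induction rule: typed.induct)
  case (var G2v c G1v A)
  show ?case
  proof (intro allI impI)
    fix G1 G2 assume eq: "G1v @ [T A] @ G2v = G1 @ G2" and lf: "lock_free W"
    obtain us where
      "(G1v = G1 @ us \<and> us @ [T A] @ G2v = G2) \<or> (G1v @ us = G1 \<and> [T A] @ G2v = us @ G2)"
      using append_eq_append_conv2[THEN iffD1, OF eq] by blast
    then show "\<exists>t'. typed c (G1 @ W @ G2) t' A"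
    proof
      assume h: "G1v = G1 @ us \<and> us @ [T A] @ G2v = G2"
      then show ?thesis using typed.var[of G2v c "G1 @ W @ us" A] var by auto
    next
      assume h: "G1v @ us = G1 \<and> [T A] @ G2v = us @ G2"
      show ?thesis
      proof (cases us)
        case Nil
        then show ?thesis using h typed.var[of G2v c "G1 @ W" A] var by auto
      next
        case (Cons x us')
        then have "G2v = us' @ G2" "x = T A" using h by auto
        moreover have "lock_free (us' @ W @ G2)" using var lf \<open>G2v = us' @ G2\<close>
          by (auto simp: lock_free_def)
        ultimately show ?thesis using h Cons typed.var[of "us' @ W @ G2" c G1v A] by auto
      qed
    qed
  qed
next
  case (lam c G A t B)
  show ?case
  proof (intro allI impI)
    fix G1 G2 assume "G = G1 @ G2" "lock_free W"
    then obtain t' where "typed c (G1 @ W @ G2 @ [T A]) t' B" using lam.IH[rule_format, of G1 "G2 @ [T A]"] by auto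
    then show "\<exists>t'. typed c (G1 @ W @ G2) t' (Fun A B)" using typed.lam[of c "G1 @ W @ G2"] by auto
  qed
next
  case (app c G t A B u)
  show ?case
  proof (intro allI impI)
    fix G1 G2 assume "G = G1 @ G2" "lock_free W"
    then obtain t' u' where "typed c (G1 @ W @ G2) t' (Fun A B)" "typed c (G1 @ W @ G2) u' A"
      using app.IH by blast
    then show "\<exists>t'. typed c (G1 @ W @ G2) t' B" using typed.app by blast
  qed
next
  case (box c G t A)
  show ?case
  proof (intro allI impI)
    fix G1 G2 assume "G = G1 @ G2" "lock_free W"
    then obtain t' where "typed c (G1 @ W @ G2 @ [Lock]) t' A" using box.IH[rule_format, of G1 "G2 @ [Lock]"] by auto
    then show "\<exists>t'. typed c (G1 @ W @ G2) t' (Box A)" using typed.box[of c "G1 @ W @ G2"] by auto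
  qed
next
  case (unbox c D t A e)
  show ?case
  proof (intro allI impI)
    fix G1 G2 assume eq: "D @ e = G1 @ G2" and lf: "lock_free W"
    obtain us where
      "(D = G1 @ us \<and> us @ e = G2) \<or> (D @ us = G1 \<and> e = us @ G2)"
      using append_eq_append_conv2[THEN iffD1, OF eq] by blast
    then show "\<exists>t'. typed c (G1 @ W @ G2) t' A"
    proof
      assume h: "D = G1 @ us \<and> us @ e = G2"
      then obtain s' where "typed c (G1 @ W @ us) s' (Box A)" using unbox.IH lf by blast
      then show ?thesis using typed.unbox[OF _ unbox.hyps(2)] h by fastforce
    next
      assume h: "D @ us = G1 \<and> e = us @ G2"
      show ?thesis
      proof (cases us)
        case Nil
        then obtain s' where "typed c (D @ W @ []) s' (Box A)" using unbox.IH lf by blast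
        then show ?thesis using typed.unbox[OF _ unbox.hyps(2)] h Nil by fastforce
      next
        case (Cons x us')
        have "ext_ok c (us @ W @ G2)"
        proof (cases c)
          case IK_C
          then obtain e' where "e = Lock # e'" "lock_free e'" using unbox.hyps(2) by auto
          then show ?thesis using IK_C h Cons lf by (auto simp: lock_free_def)
        qed simp
        then show ?thesis using typed.unbox[OF unbox.hyps(1)] h by fastforce
      qed
    qed
  qed
qed

lemma typed_weak_end: "typed c G t A \<Longrightarrow> lock_free W \<Longrightarrow> \<exists>t'. typed c (G @ W) t' A"
  using typed_weak_gen[of c G t A W] by (metis append_Nil2)

fun dg :: "ty \<Rightarrow> ty" where
  "dg Iota = Iota"
| "dg (Fun a b) = Fun (dg a) (dg b)"
| "dg (Box a) = a"

fun dge :: "entry \<Rightarrow> entry" where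
  "dge (T a) = T (dg a)"
| "dge Lock = Lock"

lemma dge_Lock: "dge x = Lock \<longleftrightarrow> x = Lock"
  by (cases x) auto

lemma lock_free_map_dge: "lock_free (map dge G) = lock_free G"
  unfolding lock_free_def by (induction G) (auto simp: dge_Lock dest: sym)

lemma lemK:
  "typed IK_C G t A \<Longrightarrow>
    (lock_free G \<longrightarrow> (\<exists>t'. typed IK_C (map dge G) t' (dg A))) \<and>
    (\<forall>G0 G1. G = G0 @ Lock # G1 \<longrightarrow> lock_free G0 \<longrightarrow> (\<exists>t'. typed IK_C (map dge G0 @ G1) t' A))"
proof (induction IK_C G t A rule: typed.induct)
  case (var G2 G1v A)
  show ?case
  proof (intro conjI allI impI)
    assume "lock_free (G1v @ [T A] @ G2)"
    then show "\<exists>t'. typed IK_C (map dge (G1v @ [T A] @ G2)) t' (dg A)"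
      using typed.var[of "map dge G2" IK_C "map dge G1v" "dg A"] var lock_free_map_dge by auto
  next
    fix G0 G1 assume eq: "G1v @ [T A] @ G2 = G0 @ Lock # G1" and lf: "lock_free G0"
    obtain us where
      "(G0 = G1v @ us \<and> us @ Lock # G1 = [T A] @ G2) \<or> (G0 @ us = G1v \<and> Lock # G1 = us @ [T A] @ G2)"
      using append_eq_append_conv2[THEN iffD1, OF eq[symmetric]] by blast
    then show "\<exists>t'. typed IK_C (map dge G0 @ G1) t' A"
    proof
      assume h: "G0 = G1v @ us \<and> us @ Lock # G1 = [T A] @ G2"
      have "Lock \<in> set (us @ Lock # G1)" by simp
      then have "Lock \<in> set ([T A] @ G2)" unfolding h[THEN conjunct2] .
      then show ?thesis using var by (auto simp: lock_free_def)
    next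
      assume h: "G0 @ us = G1v \<and> Lock # G1 = us @ [T A] @ G2"
      then obtain us' where "us = Lock # us'" "G1 = us' @ T A # G2" by (cases us) auto
      then show ?thesis using typed.var[of G2 IK_C "map dge G0 @ us'" A] var by auto
    qed
  qed
next
  case (lam G A t B)
  show ?case
  proof (intro conjI allI impI)
    assume "lock_free G"
    then have "lock_free (G @ [T A])" by (auto simp: lock_free_def)
    then obtain t' where "typed IK_C (map dge G @ [T (dg A)]) t' (dg B)" using lam.hyps(2) by auto
    then show "\<exists>t'. typed IK_C (map dge G) t' (dg (Fun A B))" using typed.lam by fastforce
  next
    fix G0 G1 assume "G = G0 @ Lock # G1" "lock_free G0"
    then obtain t' where "typed IK_C (map dge G0 @ G1 @ [T A]) t' B"
      using lam.hyps(2)[THEN conjunct2, rule_format, of G0 "G1 @ [T A]"] by auto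
    then show "\<exists>t'. typed IK_C (map dge G0 @ G1) t' (Fun A B)" using typed.lam[of IK_C "map dge G0 @ G1"] by auto
  qed
next
  case (app G t A B u)
  show ?case
  proof (intro conjI allI impI)
    assume "lock_free G"
    then show "\<exists>t'. typed IK_C (map dge G) t' (dg B)" using app.hyps(2,4) typed.app by fastforce
  next
    fix G0 G1 assume "G = G0 @ Lock # G1" "lock_free G0"
    then obtain t' u' where "typed IK_C (map dge G0 @ G1) t' (Fun A B)" "typed IK_C (map dge G0 @ G1) u' A"
      using app.hyps(2,4) by blast
    then show "\<exists>t'. typed IK_C (map dge G0 @ G1) t' B" using typed.app by blast
  qed
next
  case (box G t A)
  show ?case
  proof (intro conjI allI impI)
    assume "lock_free G"
    then obtain t' where "typed IK_C (map dge G @ []) t' A"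
      using box.hyps(2)[THEN conjunct2, rule_format, of G "[]"] by auto
    then show "\<exists>t'. typed IK_C (map dge G) t' (dg (Box A))" by auto
  next
    fix G0 G1 assume "G = G0 @ Lock # G1" "lock_free G0"
    then obtain t' where "typed IK_C (map dge G0 @ G1 @ [Lock]) t' A"
      using box.hyps(2)[THEN conjunct2, rule_format, of G0 "G1 @ [Lock]"] by auto
    then show "\<exists>t'. typed IK_C (map dge G0 @ G1) t' (Box A)" using typed.box[of IK_C "map dge G0 @ G1"] by auto
  qed
next
  case (unbox D t A e)
  obtain e' where e: "e = Lock # e'" "lock_free e'" using unbox.hyps(3) by auto
  show ?case
  proof (intro conjI allI impI)
    assume "lock_free (D @ e)"
    then show "\<exists>t'. typed IK_C (map dge (D @ e)) t' (dg A)" using e by (auto simp: lock_free_def)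
  next
    fix G0 G1 assume eq: "D @ e = G0 @ Lock # G1" and lf: "lock_free G0"
    obtain us where
      "(D = G0 @ us \<and> us @ e = Lock # G1) \<or> (D @ us = G0 \<and> e = us @ Lock # G1)"
      using append_eq_append_conv2[THEN iffD1, OF eq] by blast
    then have "(D = G0 \<and> e' = G1) \<or> (\<exists>X. D = G0 @ Lock # X \<and> G1 = X @ e)"
    proof
      assume h: "D = G0 @ us \<and> us @ e = Lock # G1"
      then show ?thesis using e by (cases us) auto
    next
      assume h: "D @ us = G0 \<and> e = us @ Lock # G1"
      show ?thesis
      proof (cases us)
        case Nil then show ?thesis using h e by auto
      next
        case (Cons x us')
        then have "x = Lock" using h e by auto
        then show ?thesis using h lf Cons by (auto simp: lock_free_def)
      qed
    qed
    then show "\<exists>t'. typed IK_C (map dge G0 @ G1) t' A"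
    proof
      assume h: "D = G0 \<and> e' = G1"
      then obtain s' where "typed IK_C (map dge D) s' (dg (Box A))" using unbox.hyps(2) lf by blast
      then show ?thesis using typed_weak_end[of IK_C "map dge D" s' A e'] e h by auto
    next
      assume "\<exists>X. D = G0 @ Lock # X \<and> G1 = X @ e"
      then obtain X where h: "D = G0 @ Lock # X" "G1 = X @ e" by blast
      then obtain s' where "typed IK_C (map dge G0 @ X) s' (Box A)" using unbox.hyps(2) lf by blast
      then show ?thesis using typed.unbox[OF _ unbox.hyps(3)] h by fastforce
    qed
  qed
qed

lemma ntys_append[simp]: "ntys (a @ b) = ntys a + ntys b"
  by (simp add: ntys_def)

lemma ntys_lock_free: "lock_free G \<Longrightarrow> ntys G = length G"
proof -
  assume "lock_free G"
  then have "filter (\<lambda>e. e \<noteq> Lock) G = G" unfolding lock_free_def filter_id_conv by blast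
  then show ?thesis unfolding ntys_def by simp
qed

lemma main:
  "typed c G0 t A \<Longrightarrow> \<forall>D G. G0 = D @ G \<longrightarrow> fv t \<subseteq> {..< ntys G} \<longrightarrow> (\<exists>t'. typed c G t' A)"
proof (induction rule: typed.induct)
  case (var G2 c G1v A)
  show ?case
  proof (intro allI impI)
    fix D G assume eq: "G1v @ [T A] @ G2 = D @ G" and fvs: "fv (Var (length G2)) \<subseteq> {..<ntys G}"
    have lt: "length G2 < ntys G" using fvs by simp
    obtain us where
      "(D = G1v @ us \<and> us @ G = [T A] @ G2) \<or> (D @ us = G1v \<and> G = us @ [T A] @ G2)"
      using append_eq_append_conv2[THEN iffD1, OF eq[symmetric]] by blast
    then show "\<exists>t'. typed c G t' A"
    proof
      assume h: "D = G1v @ us \<and> us @ G = [T A] @ G2"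
      show ?thesis
      proof (cases us)
        case Nil
        then show ?thesis using h typed.var[of G2 c "[]" A] var by auto
      next
        case (Cons x us')
        then have "G2 = us' @ G" using h by auto
        then have "ntys G \<le> length G2" using var ntys_lock_free[of G2] by (simp add: ntys_def)
        then show ?thesis using lt by simp
      qed
    next
      assume h: "D @ us = G1v \<and> G = us @ [T A] @ G2"
      then show ?thesis using typed.var[of G2 c us A] var by auto
    qed
  qed
next
  case (lam c G' A t B)
  show ?case
  proof (intro allI impI)
    fix D G assume eq: "G' = D @ G" and fvs: "fv (Lam t) \<subseteq> {..<ntys G}"
    have "fv t \<subseteq> {..<ntys (G @ [T A])}"
    proof
      fix n assume n: "n \<in> fv t"
      show "n \<in> {..<ntys (G @ [T A])}"
      proof (cases n)
        case 0 then show ?thesis by (simp add: ntys_def)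
      next
        case (Suc m) then show ?thesis using n fvs by (auto simp: ntys_def)
      qed
    qed
    then obtain t' where "typed c (G @ [T A]) t' B" using lam.IH[rule_format, of D "G @ [T A]"] eq by auto
    then show "\<exists>t'. typed c G t' (Fun A B)" using typed.lam by blast
  qed
next
  case (app c G' t A B u)
  show ?case
  proof (intro allI impI)
    fix D G assume "G' = D @ G" "fv (App t u) \<subseteq> {..<ntys G}"
    then have "fv t \<subseteq> {..<ntys G}" "fv u \<subseteq> {..<ntys G}" by auto
    then obtain t' u' where "typed c G t' (Fun A B)" "typed c G u' A"
      using app.IH(1)[rule_format, of D G] app.IH(2)[rule_format, of D G] \<open>G' = D @ G\<close> by blast
    then show "\<exists>t'. typed c G t' B" using typed.app by blast
  qed
next
  case (box c G' t A)
  show ?case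
  proof (intro allI impI)
    fix D G assume eq: "G' = D @ G" and fvs: "fv (BoxI t) \<subseteq> {..<ntys G}"
    have "fv t \<subseteq> {..<ntys (G @ [Lock])}" using fvs by (simp add: ntys_def)
    then obtain t' where "typed c (G @ [Lock]) t' A" using box.IH[rule_format, of D "G @ [Lock]"] eq by auto
    then show "\<exists>t'. typed c G t' (Box A)" using typed.box by blast
  qed
next
  case (unbox c D0 s A e)
  show ?case
  proof (intro allI impI)
    fix D G assume eq: "D0 @ e = D @ G" and fvs: "fv (Unbox s e) \<subseteq> {..<ntys G}"
    obtain us where
      "(D0 = D @ us \<and> us @ e = G) \<or> (D0 @ us = D \<and> e = us @ G)"
      using append_eq_append_conv2[THEN iffD1, OF eq] by blast
    then show "\<exists>t'. typed c G t' A"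
    proof
      assume h: "D0 = D @ us \<and> us @ e = G"
      have "fv s \<subseteq> {..<ntys us}" using fvs h by auto
      then obtain s' where s': "typed c us s' (Box A)" using unbox.IH[rule_format, of D us] h by blast
      show ?thesis using typed.unbox[OF s' unbox.hyps(2)] h by auto
    next
      assume h: "D0 @ us = D \<and> e = us @ G"
      have "fv s = {}"
      proof (rule ccontr)
        assume "fv s \<noteq> {}"
        then obtain n where "n \<in> fv s" by blast
        then have "n + ntys e \<in> fv (Unbox s e)" by simp
        then have "n + ntys e < ntys G" using fvs by blast
        moreover have "ntys G \<le> ntys e" using h by simp
        ultimately show False by simp
      qed
      then obtain s' where s': "typed c [] s' (Box A)" using unbox.IH[rule_format, of D0 "[]"] by auto
      show ?thesis
      proof (cases c)
        case IS4_C
        then show ?thesis using typed.unbox[OF s', of G] by auto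
      next
        case IK_C
        obtain e' where e: "e = Lock # e'" "lock_free e'" using unbox.hyps(2) IK_C by auto
        show ?thesis
        proof (cases us)
          case Nil
          then show ?thesis using typed.unbox[OF s' unbox.hyps(2)] h by auto
        next
          case (Cons x us')
          then have "lock_free G" using e h by (auto simp: lock_free_def)
          obtain a where "typed IK_C (map dge []) a (dg (Box A))"
            using lemK[OF s'[unfolded IK_C]] by (auto simp: lock_free_def)
          then have "typed IK_C (G @ []) a A" using typed_prefix[of IK_C "[]" a A G] by simp
          then show ?thesis using IK_C by auto
        qed
      qed
    qed
  qed
qed

theorem lemma3:
  fixes c :: calculus and D G :: ctx and t :: tm and A :: ty
  assumes "typed c (D @ G) t A"
    and "fv t \<subseteq> {..< ntys G}"
  shows "\<exists>t'. typed c G t' A"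
  using main[OF assms(1), rule_format, OF refl assms(2)] .

end
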